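(* Let $(X,d)$ be a metric space and let $u,u_1,u_2,\ldots\in F_{USCG}(X)$. Then the following statements are equivalent: (i) $u_n\stackrel{\Gamma}{\longrightarrow}u$; (ii) $[u_n]_\alpha$ Kuratowski converges to $[u]_\alpha$ for almost every $\alpha\in(0,1)$ (with respect to Lebesgue measure); (iii) $[u_n]_\alpha$ Kuratowski converges to $[u]_\alpha$ for all $\alpha\in(0,1)\setminus P(u)$; (iv) there is a dense subset $P$ of $(0,1)\setminus P(u)$ such that $[u_n]_\alpha$ Kuratowski converges to $[u]_\alpha$ for all $\alpha\in P$; (v) there is a countable dense subset $P$ of $(0,1)\setminus P(u)$ such that $[u_n]_\alpha$ Kuratowski converges to $[u]_\alpha$ for all $\alpha\in P$.
   Context: A fuzzy set on $X$ is a function $u:X\to[0,1]$, with $\alpha$-cuts $[u]_\alpha=\{x: u(x)\ge\alpha\}$ for $\alpha\in(0,1]$ and $[u]_0=\overline{\{u>0\}}$. $F_{USC}(X)$ is the set of fuzzy sets with all $\alpha$-cuts ($\alpha\in[0,1]$) non-empty and closed; $F_{USCG}(X)=\{u\in F_{USC}(X): [u]_\alpha\text{ is compact for all }\alpha\in(0,1]\}$. For sets $C_n\subseteq X$: $\liminf_n C_n=\{x: x=\lim_n x_n, x_n\in C_n\}$, $\limsup_n C_n=\{x: x=\lim_j x_{n_j}, x_{n_j}\in C_{n_j}\}$; $C_n$ Kuratowski converges to $C$ if $C=\liminf_n C_n=\limsup_n C_n$. ${\rm end}\,u=\{(x,t)\in X\times[0,1]: u(x)\ge t\}$, with $X\times[0,1]$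 metrized by $\overline{d}((x,\alpha),(y,\beta))=d(x,y)+|\alpha-\beta|$. $u_n\stackrel{\Gamma}{\longrightarrow}u$ means ${\rm end}\,u_n$ Kuratowski converges to ${\rm end}\,u$. A number $\alpha\in(0,1)$ is a platform point of $u$ if $\overline{\{u>\alpha\}}\subsetneqq[u]_\alpha$; $P(u)$ is the set of platform points of $u$. *)

theory Defs
  imports "HOL-Analysis.Analysis"
begin

text \<open>Fuzzy sets on a metric space X (the whole type 'a) are functions 'a \<Rightarrow> real
  with values in [0,1].\<close>

definition cut :: "('a::metric_space \<Rightarrow> real) \<Rightarrow> real \<Rightarrow> 'a set" where
  "cut u \<alpha> = (if \<alpha> = 0 then closure {x. u x > 0} else {x. u x \<ge> \<alpha>})"

definition F_USC :: "('a::metric_space \<Rightarrow> real) set" where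
  "F_USC = {u. (\<forall>x. 0 \<le> u x \<and> u x \<le> 1) \<and>
               (\<forall>\<alpha>\<in>{0..1}. cut u \<alpha> \<noteq> {} \<and> closed (cut u \<alpha>))}"

definition F_USCG :: "('a::metric_space \<Rightarrow> real) set" where
  "F_USCG = {u. u \<in> F_USC \<and> (\<forall>\<alpha>\<in>{0<..1}. compact (cut u \<alpha>))}"

definition kliminf :: "(nat \<Rightarrow> 'a::metric_space set) \<Rightarrow> 'a set" where
  "kliminf C = {x. \<exists>f. (\<forall>n. f n \<in> C n) \<and> f \<longlonglongrightarrow> x}"

definition klimsup :: "(nat \<Rightarrow> 'a::metric_space set) \<Rightarrow> 'a set" where
  "klimsup C = {x. \<exists>r f. strict_mono r \<and> (\<forall>j. f j \<in> C (r j)) \<and> f \<longlonglongrightarrow> x}"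

definition kuratowski_conv :: "(nat \<Rightarrow> 'a::metric_space set) \<Rightarrow> 'a set \<Rightarrow> bool" where
  "kuratowski_conv C D \<longleftrightarrow> D = kliminf C \<and> D = klimsup C"

text \<open>Endograph, as a subset of X \<times> [0,1]; the product metric of Isabelle's product type
  induces the same convergent sequences as d(x,y) + |\<alpha> - \<beta>|.\<close>
definition endo :: "('a::metric_space \<Rightarrow> real) \<Rightarrow> ('a \<times> real) set" where
  "endo u = {(x, t). t \<in> {0..1} \<and> u x \<ge> t}"

definition gamma_conv :: "(nat \<Rightarrow> 'a::metric_space \<Rightarrow> real) \<Rightarrow> ('a \<Rightarrow> real) \<Rightarrow> bool" where
  "gamma_conv us u \<longleftrightarrow> kuratowski_conv (\<lambda>n. endo (us n)) (endo u)"

definition platform_points :: "('a::metric_space \<Rightarrow> real) \<Rightarrow> real set" where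
  "platform_points u = {\<alpha>\<in>{0<..<1}. closure {x. u x > \<alpha>} \<subset> cut u \<alpha>}"

end

theory Submission
  imports Defs
begin

lemma cut_pos: "\<alpha> \<noteq> 0 \<Longrightarrow> cut u \<alpha> = {x. \<alpha> \<le> u x}"
  by (simp add: cut_def)

lemma FU_range: "u \<in> F_USC \<Longrightarrow> 0 \<le> u x \<and> u x \<le> 1"
  by (simp add: F_USC_def)

lemma FU_cut: "u \<in> F_USC \<Longrightarrow> \<alpha> \<in> {0..1} \<Longrightarrow> cut u \<alpha> \<noteq> {} \<and> closed (cut u \<alpha>)"
  by (simp add: F_USC_def)

lemma dist_lim1:
  fixes f :: "nat \<Rightarrow> 'a::metric_space"
  assumes "f \<longlonglongrightarrow> x"
  shows "(\<lambda>n. dist x (f n)) \<longlonglongrightarrow> 0"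
    using tendsto_dist[OF tendsto_const assms, of x] by simp

lemma dist_lim2:
  fixes f :: "nat \<Rightarrow> 'a::metric_space"
  assumes "(\<lambda>n. dist x (f n)) \<longlonglongrightarrow> 0"
  shows "f \<longlonglongrightarrow> x"
proof -
  have "(\<lambda>n. dist (f n) x) = (\<lambda>n. dist x (f n))" by (rule ext) (rule dist_commute)
  then show ?thesis using assms tendsto_dist_iff by metis
qed

lemma kliminf_infdist:
  assumes ne: "\<And>n. C n \<noteq> {}"
  shows "x \<in> kliminf C \<longleftrightarrow> (\<lambda>n. infdist x (C n)) \<longlonglongrightarrow> 0"
proof
  assume "x \<in> kliminf C"
  then obtain f where f: "\<And>n. f n \<in> C n" "f \<longlonglongrightarrow> x" by (auto simp: kliminf_def)
  have d: "(\<lambda>n. dist x (f n)) \<longlonglongrightarrow> 0"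
    using f(2) by (rule dist_lim1)
  show "(\<lambda>n. infdist x (C n)) \<longlonglongrightarrow> 0"
    by (rule tendsto_sandwich[of "\<lambda>n. 0" _ _ "\<lambda>n. dist x (f n)"])
       (simp_all add: infdist_nonneg infdist_le f(1) d)
next
  assume t: "(\<lambda>n. infdist x (C n)) \<longlonglongrightarrow> 0"
  have "\<forall>n. \<exists>y\<in>C n. dist x y < infdist x (C n) + 1 / real (Suc n)"
  proof
    fix n
    have i: "infdist x (C n) = Inf ((\<lambda>a. dist x a) ` C n)"
      using infdist_notempty[OF ne[of n], of x] .
    have "Inf ((\<lambda>a. dist x a) ` C n) < infdist x (C n) + 1 / real (Suc n)"
      unfolding i by simp
    then obtain z where "z \<in> (\<lambda>a. dist x a) ` C n" "z < infdist x (C n) + 1 / real (Suc n)"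
      using cInf_lessD[of "(\<lambda>a. dist x a) ` C n"] ne[of n] by blast
    then show "\<exists>y\<in>C n. dist x y < infdist x (C n) + 1 / real (Suc n)"
      by blast
  qed
  then obtain f where f: "\<And>n. f n \<in> C n" "\<And>n. dist x (f n) < infdist x (C n) + 1 / real (Suc n)"
    by metis
  have l: "(\<lambda>n. infdist x (C n) + 1 / real (Suc n)) \<longlonglongrightarrow> 0 + 0"
    by (rule tendsto_add[OF t LIMSEQ_inverse_real_of_nat[unfolded inverse_eq_divide]])
  have le: "\<forall>n. dist x (f n) \<le> infdist x (C n) + 1 / real (Suc n)" using f(2) less_imp_le by blast
  have "(\<lambda>n. dist x (f n)) \<longlonglongrightarrow> 0"
    apply (rule tendsto_sandwich[of "\<lambda>n. 0" _ _ "\<lambda>n. infdist x (C n) + 1 / real (Suc n)"])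
    using le l by auto
  then have "f \<longlonglongrightarrow> x" by (rule dist_lim2)
  then show "x \<in> kliminf C" using f(1) by (auto simp: kliminf_def)
qed

lemma kliminf_closed:
  assumes ne: "\<And>n. C n \<noteq> {}"
  shows "closed (kliminf C)"
proof -
 have "closure (kliminf C) \<subseteq> kliminf C"
 proof
  fix x assume "x \<in> closure (kliminf C)"
  then have H: "\<forall>e>0. \<exists>y\<in>kliminf C. dist y x < e" by (simp only: closure_approachable)
  have "\<forall>e>0. eventually (\<lambda>n. dist (infdist x (C n)) 0 < e) sequentially"
  proof (intro allI impI)
    fix e :: real assume e: "e > 0"
    have e2: "e/2 > 0" using e by simp
    obtain y where y: "y \<in> kliminf C" "dist y x < e/2" using H e2 by blast
    have "(\<lambda>n. infdist y (C n)) \<longlonglongrightarrow> 0" using kliminf_infdist[of C y, OF ne] y(1) by (rule iffD1)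
    then have all: "\<forall>e>0. eventually (\<lambda>n. dist (infdist y (C n)) 0 < e) sequentially"
      by (rule tendsto_iff[THEN iffD1])
    have "eventually (\<lambda>n. dist (infdist y (C n)) 0 < e/2) sequentially"
      using all e2 by blast
    then show "eventually (\<lambda>n. dist (infdist x (C n)) 0 < e) sequentially"
    proof (rule eventually_mono)
      fix n assume a: "dist (infdist y (C n)) 0 < e/2"
      have b: "infdist x (C n) \<le> infdist y (C n) + dist x y" by (rule infdist_triangle)
      have c: "dist x y < e/2" using y(2) by (simp only: dist_commute)
      have a': "infdist y (C n) < e/2" using a infdist_nonneg[of y "C n"] by (simp add: dist_real_def)
      have "infdist x (C n) < e" using a' b c by linarith
      then show "dist (infdist x (C n)) 0 < e"
        using infdist_nonneg[of x "C n"] by (simp add: dist_real_def)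
    qed
  qed
  then have "(\<lambda>n. infdist x (C n)) \<longlonglongrightarrow> 0" by (rule tendsto_iff[THEN iffD2])
  then show "x \<in> kliminf C" using kliminf_infdist[of C x, OF ne] by (rule iffD2[rotated])
 qed
 then show ?thesis by (simp add: closure_subset_eq)
qed

lemma kliminf_eventually:
  assumes ne: "\<And>n. C n \<noteq> {}" and ev: "eventually (\<lambda>n. f n \<in> C n) sequentially"
    and lim: "f \<longlonglongrightarrow> x"
  shows "x \<in> kliminf C"
proof -
  define g where "g n = (if f n \<in> C n then f n else (SOME y. y \<in> C n))" for n
  have g: "g n \<in> C n" for n using ne[of n] by (auto simp: g_def intro: someI_ex)
  have "eventually (\<lambda>n. f n = g n) sequentially" using ev by (rule eventually_mono) (simp add: g_def)
  then have "g \<longlonglongrightarrow> x" using lim by (rule Lim_transform_eventually[rotated])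
  then show ?thesis using g by (auto simp: kliminf_def)
qed

lemma klimsup_shift:
  assumes r: "strict_mono r" and f: "\<And>j. j \<ge> N \<Longrightarrow> f j \<in> C (r j)" and lim: "f \<longlonglongrightarrow> x"
  shows "x \<in> klimsup C"
proof -
  have "strict_mono (\<lambda>j. r (j + N))" using r by (simp add: strict_mono_def)
  moreover have "\<forall>j. f (j + N) \<in> C (r (j + N))" using f by simp
  moreover have "(\<lambda>j. f (j + N)) \<longlonglongrightarrow> x" using lim by (rule LIMSEQ_ignore_initial_segment)
  ultimately show ?thesis unfolding klimsup_def mem_Collect_eq
    by (intro exI[of _ "\<lambda>j. r (j + N)"] exI[of _ "\<lambda>j. f (j + N)"] conjI)
qed

lemma kliminf_sub_klimsup: "kliminf C \<subseteq> klimsup C"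
proof
  fix x assume "x \<in> kliminf C"
  then obtain f where f: "\<forall>n. f n \<in> C n" "f \<longlonglongrightarrow> x" by (auto simp: kliminf_def)
  have "strict_mono (\<lambda>n::nat. n)" by (simp add: strict_mono_def)
  then show "x \<in> klimsup C" unfolding klimsup_def mem_Collect_eq
    by (intro exI[of _ "\<lambda>n::nat. n"] exI[of _ f] conjI f)
qed

lemma endo_iff: "p \<in> endo v \<longleftrightarrow> 0 \<le> snd p \<and> snd p \<le> 1 \<and> snd p \<le> v (fst p)"
  by (cases p) (auto simp: endo_def)

lemma dense_pick:
  assumes P: "{0<..<1} \<subseteq> closure P" and ab: "0 \<le> a" "a < b" "b \<le> (1::real)"
  obtains g where "g \<in> P" "a < g" "g < b"
proof -
  define c where "c = (a+b)/2"
  have "c \<in> {0<..<1}" using ab by (simp add: c_def)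
  then have "c \<in> closure P" using P by blast
  moreover have "(b-a)/2 > 0" using ab by simp
  ultimately obtain g where g: "g \<in> P" "dist g c < (b-a)/2"
    unfolding closure_approachable by blast
  then have h: "\<bar>g - c\<bar> < (b-a)/2" by (simp only: dist_real_def)
  then have h2: "g - c < (b-a)/2" "c - g < (b-a)/2" by (auto simp only: abs_less_iff)
  have "a < g" using h2 unfolding c_def by (simp add: field_simps)
  moreover have "g < b" using h2 unfolding c_def by (simp add: field_simps)
  ultimately show ?thesis using g(1) that by blast
qed

lemma core:
  fixes u :: "'a::metric_space \<Rightarrow> real" and us :: "nat \<Rightarrow> 'a \<Rightarrow> real"
  assumes u: "u \<in> F_USC" and us: "\<And>n. us n \<in> F_USC"
    and P: "P \<subseteq> {0<..<1}" "{0<..<1} \<subseteq> closure P"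
    and conv: "\<And>\<alpha>. \<alpha> \<in> P \<Longrightarrow> kuratowski_conv (\<lambda>n. cut (us n) \<alpha>) (cut u \<alpha>)"
  shows "gamma_conv us u"
proof -
  define E where "E n = endo (us n)" for n
  have ne: "E n \<noteq> {}" for n
  proof -
    have "(undefined, 0) \<in> E n" using FU_range[OF us[of n]] by (simp add: E_def endo_iff)
    then show ?thesis by blast
  qed
  have A: "endo u \<subseteq> kliminf E"
  proof
    fix p assume p: "p \<in> endo u"
    obtain x \<alpha> where xa: "p = (x, \<alpha>)" by (cases p)
    have pa: "0 \<le> \<alpha>" "\<alpha> \<le> 1" "\<alpha> \<le> u x" using p xa by (auto simp: endo_iff)
    show "p \<in> kliminf E"
    proof (cases "\<alpha> = 0")
      case True
      have "\<forall>n. (x, 0) \<in> E n" using FU_range[OF us] by (simp add: E_def endo_iff)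
      moreover have "(\<lambda>n. (x, 0::real)) \<longlonglongrightarrow> (x, 0)" by (rule tendsto_const)
      ultimately show ?thesis unfolding kliminf_def mem_Collect_eq xa True
        by (intro exI[of _ "\<lambda>n. (x, 0::real)"] conjI)
    next
      case False
      then have apos: "0 < \<alpha>" using pa by simp
      have "p \<in> closure (kliminf E)" unfolding closure_approachable
      proof (intro allI impI)
        fix e :: real assume e: "e > 0"
        obtain g where g: "g \<in> P" "max 0 (\<alpha> - e) < g" "g < \<alpha>"
          using dense_pick[OF P(2), of "max 0 (\<alpha> - e)" \<alpha>] apos pa e by auto
        have gpos: "0 < g" "g < 1" using g(1) P(1) by auto
        have cg: "\<And>v. cut v g = {x. g \<le> v x}" using cut_pos[of g] gpos by simp
        have "x \<in> cut u g" using pa g by (simp add: cg)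
        then have "x \<in> kliminf (\<lambda>n. cut (us n) g)" using conv[OF g(1)] by (simp add: kuratowski_conv_def)
        then obtain f where f: "\<forall>n. f n \<in> cut (us n) g" "f \<longlonglongrightarrow> x" by (auto simp: kliminf_def)
        have "\<forall>n. (f n, g) \<in> E n" using f(1) gpos by (simp add: E_def endo_iff cg)
        moreover have "(\<lambda>n. (f n, g)) \<longlonglongrightarrow> (x, g)" by (rule tendsto_Pair[OF f(2) tendsto_const])
        ultimately have "(x, g) \<in> kliminf E" unfolding kliminf_def mem_Collect_eq
          by (intro exI[of _ "\<lambda>n. (f n, g)"] conjI)
        moreover have "dist (x, g) p < e" using xa g by (simp add: dist_Pair_Pair dist_real_def)
        ultimately show "\<exists>y\<in>kliminf E. dist y p < e" by blast
      qed
      then show ?thesis using closure_closed[OF kliminf_closed[of E, OF ne]] by simp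
    qed
  qed
  have B: "klimsup E \<subseteq> endo u"
  proof
    fix p assume "p \<in> klimsup E"
    then obtain r f where rf: "strict_mono r" "\<forall>j. f j \<in> E (r j)" "f \<longlonglongrightarrow> p"
      by (auto simp: klimsup_def)
    obtain x \<alpha> where xa: "p = (x, \<alpha>)" by (cases p)
    have fx: "(\<lambda>j. fst (f j)) \<longlonglongrightarrow> x" using tendsto_fst[OF rf(3)] xa by simp
    have fa: "(\<lambda>j. snd (f j)) \<longlonglongrightarrow> \<alpha>" using tendsto_snd[OF rf(3)] xa by simp
    have fj: "0 \<le> snd (f j) \<and> snd (f j) \<le> 1 \<and> snd (f j) \<le> us (r j) (fst (f j))" for j
      using rf(2) by (simp add: E_def endo_iff)
    have a0: "0 \<le> \<alpha>" using fj by (intro LIMSEQ_le_const[OF fa]) blast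
    have a1: "\<alpha> \<le> 1" using fj by (intro LIMSEQ_le_const2[OF fa]) blast
    have "\<alpha> \<le> u x"
    proof (rule ccontr)
      assume "\<not> \<alpha> \<le> u x"
      then have lt: "u x < \<alpha>" by simp
      have ux: "0 \<le> u x" using FU_range[OF u] by blast
      obtain g where g: "g \<in> P" "u x < g" "g < \<alpha>" using dense_pick[OF P(2) ux lt a1] by blast
      have gpos: "0 < g" "g < 1" using g(1) P(1) by auto
      have cg: "\<And>v. cut v g = {x. g \<le> v x}" using cut_pos[of g] gpos by simp
      have "eventually (\<lambda>j. g < snd (f j)) sequentially" by (rule order_tendstoD(1)[OF fa g(3)])
      then obtain N where N: "\<And>j. j \<ge> N \<Longrightarrow> g < snd (f j)" by (auto simp: eventually_sequentially)
      have "\<And>j. j \<ge> N \<Longrightarrow> fst (f j) \<in> cut (us (r j)) g"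
      proof -
        fix j assume "j \<ge> N"
        then have "g < snd (f j)" by (rule N)
        then show "fst (f j) \<in> cut (us (r j)) g" using fj[of j] by (simp add: cg)
      qed
      then have "x \<in> klimsup (\<lambda>n. cut (us n) g)" by (rule klimsup_shift[OF rf(1) _ fx])
      then have "x \<in> cut u g" using conv[OF g(1)] unfolding kuratowski_conv_def by blast
      then have "g \<le> u x" by (simp add: cg)
      then show False using g(2) by simp
    qed
    then show "p \<in> endo u" using xa a0 a1 by (simp add: endo_iff)
  qed
  have "endo u = kliminf E" using A B kliminf_sub_klimsup[of E] by blast
  moreover have "endo u = klimsup E" using A B kliminf_sub_klimsup[of E] by blast
  ultimately show ?thesis unfolding gamma_conv_def kuratowski_conv_def E_def by simp
qed

lemma forward:
  fixes u :: "'a::metric_space \<Rightarrow> real" and us :: "nat \<Rightarrow> 'a \<Rightarrow> real"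
  assumes u: "u \<in> F_USC" and us: "\<And>n. us n \<in> F_USC" and G: "gamma_conv us u"
    and a: "\<alpha> \<in> {0<..<1}" "\<alpha> \<notin> platform_points u"
  shows "kuratowski_conv (\<lambda>n. cut (us n) \<alpha>) (cut u \<alpha>)"
proof -
  define C where "C n = cut (us n) \<alpha>" for n
  have G1: "endo u = kliminf (\<lambda>n. endo (us n))" and G2: "endo u = klimsup (\<lambda>n. endo (us n))"
    using G unfolding gamma_conv_def kuratowski_conv_def by blast+
  have a01: "\<alpha> \<in> {0..1}" using a(1) by simp
  have ne: "C n \<noteq> {}" for n using FU_cut[OF us a01] by (simp add: C_def)
  have ca: "\<And>v. cut v \<alpha> = {x. \<alpha> \<le> v x}" using cut_pos[of \<alpha>] a(1) by simp
  have S1: "klimsup C \<subseteq> cut u \<alpha>"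
  proof
    fix x assume "x \<in> klimsup C"
    then obtain r f where rf: "strict_mono r" "\<forall>j. f j \<in> C (r j)" "f \<longlonglongrightarrow> x"
      by (auto simp: klimsup_def)
    have "\<forall>j. (f j, \<alpha>) \<in> endo (us (r j))" using rf(2) a(1) by (simp add: C_def ca endo_iff)
    moreover have "(\<lambda>j. (f j, \<alpha>)) \<longlonglongrightarrow> (x, \<alpha>)" by (rule tendsto_Pair[OF rf(3) tendsto_const])
    ultimately have "(x, \<alpha>) \<in> klimsup (\<lambda>n. endo (us n))" unfolding klimsup_def mem_Collect_eq
      by (intro exI[of _ r] exI[of _ "\<lambda>j. (f j, \<alpha>)"] conjI rf(1))
    then have "(x, \<alpha>) \<in> endo u" using G2 by simp
    then show "x \<in> cut u \<alpha>" by (simp add: endo_iff ca)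
  qed
  have sub: "{x. \<alpha> < u x} \<subseteq> kliminf C"
  proof
    fix x assume "x \<in> {x. \<alpha> < u x}"
    then have ax: "\<alpha> < u x" by simp
    have "(x, u x) \<in> endo u" using FU_range[OF u, of x] by (simp add: endo_iff)
    then have "(x, u x) \<in> kliminf (\<lambda>n. endo (us n))" using G1 by simp
    then obtain f where f: "\<forall>n. f n \<in> endo (us n)" "f \<longlonglongrightarrow> (x, u x)" by (auto simp: kliminf_def)
    have fs: "(\<lambda>n. snd (f n)) \<longlonglongrightarrow> u x" using tendsto_snd[OF f(2)] by simp
    have fx: "(\<lambda>n. fst (f n)) \<longlonglongrightarrow> x" using tendsto_fst[OF f(2)] by simp
    have "eventually (\<lambda>n. \<alpha> < snd (f n)) sequentially" by (rule order_tendstoD(1)[OF fs ax])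
    then have "eventually (\<lambda>n. fst (f n) \<in> C n) sequentially"
    proof (rule eventually_mono)
      fix n assume l: "\<alpha> < snd (f n)"
      have "snd (f n) \<le> us n (fst (f n))" using f(1) by (simp add: endo_iff)
      then show "fst (f n) \<in> C n" using l by (simp add: C_def ca)
    qed
    then show "x \<in> kliminf C" by (rule kliminf_eventually[OF ne _ fx])
  qed
  have S2: "closure {x. \<alpha> < u x} \<subseteq> kliminf C"
    by (rule closure_minimal[OF sub kliminf_closed[of C, OF ne]])
  have S3: "closure {x. \<alpha> < u x} \<subseteq> cut u \<alpha>"
  proof -
    have cl: "closed (cut u \<alpha>)" using FU_cut[OF u a01] by blast
    show ?thesis by (rule closure_minimal[OF _ cl]) (auto simp: ca)
  qed
  have "\<not> (closure {x. \<alpha> < u x} \<subset> cut u \<alpha>)" using a by (simp add: platform_points_def)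
  then have S4: "cut u \<alpha> = closure {x. \<alpha> < u x}" using S3 by blast
  have "cut u \<alpha> = kliminf C" using S1 S2 S4 kliminf_sub_klimsup[of C] by blast
  moreover have "cut u \<alpha> = klimsup C" using S1 S2 S4 kliminf_sub_klimsup[of C] by blast
  ultimately show ?thesis unfolding kuratowski_conv_def C_def by simp
qed

lemma dense_D:
  assumes N: "countable N"
  shows "{0<..<1::real} \<subseteq> closure ({0<..<1} - N)"
proof
  fix x :: real assume x: "x \<in> {0<..<1}"
  show "x \<in> closure ({0<..<1} - N)" unfolding closure_approachable
  proof (intro allI impI)
    fix e :: real assume e: "e > 0"
    define a where "a = max 0 (x - e)"
    define b where "b = min 1 (x + e)"
    have ab: "a < b" using x e by (simp add: a_def b_def)
    have "uncountable {a<..<b}" using ab by (simp add: uncountable_open_interval)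
    then have "\<not> {a<..<b} \<subseteq> N" using countable_subset N by blast
    then obtain y where y: "y \<in> {a<..<b}" "y \<notin> N" by blast
    have "y \<in> {0<..<1} - N" using y by (simp add: a_def b_def)
    moreover have "dist y x < e" using y by (simp add: a_def b_def dist_real_def abs_less_iff)
    ultimately show "\<exists>y\<in>{0<..<1} - N. dist y x < e" by blast
  qed
qed

lemma AE_dense:
  assumes AE: "AE \<alpha> in lborel. \<alpha> \<in> {0<..<1} \<longrightarrow> Q \<alpha>"
  shows "{0<..<1::real} \<subseteq> closure {\<alpha> \<in> {0<..<1}. Q \<alpha>}"
proof
  obtain N where N: "{x \<in> space lborel. \<not> (x \<in> {0<..<1::real} \<longrightarrow> Q x)} \<subseteq> N"
    "emeasure lborel N = 0" "N \<in> sets lborel"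
    using AE_E[OF AE] by blast
  fix x :: real assume x: "x \<in> {0<..<1}"
  show "x \<in> closure {\<alpha> \<in> {0<..<1}. Q \<alpha>}" unfolding closure_approachable
  proof (intro allI impI)
    fix e :: real assume e: "e > 0"
    define a where "a = max 0 (x - e)"
    define b where "b = min 1 (x + e)"
    have ab: "a < b" using x e by (simp add: a_def b_def)
    have "\<not> {a<..<b} \<subseteq> N"
    proof
      assume "{a<..<b} \<subseteq> N"
      then have "emeasure lborel {a<..<b} \<le> emeasure lborel N" by (rule emeasure_mono) (rule N(3))
      then have "ennreal (b - a) \<le> 0" using N(2) ab by simp
      then show False using ab by simp
    qed
    then obtain y where y: "y \<in> {a<..<b}" "y \<notin> N" by blast
    have y01: "y \<in> {0<..<1}" using y by (simp add: a_def b_def)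
    then have "Q y" using y(2) N(1) by auto
    then have "y \<in> {\<alpha> \<in> {0<..<1}. Q \<alpha>}" using y01 by simp
    moreover have "dist y x < e" using y by (simp add: a_def b_def dist_real_def abs_less_iff)
    ultimately show "\<exists>y\<in>{\<alpha> \<in> {0<..<1}. Q \<alpha>}. dist y x < e" by blast
  qed
qed

lemma platform_witness:
  fixes u :: "'a::metric_space \<Rightarrow> real"
  assumes "\<alpha> \<in> platform_points u"
  shows "\<exists>x r. r > 0 \<and> u x = \<alpha> \<and> (\<forall>y. dist x y < r \<longrightarrow> u y \<le> \<alpha>)"
proof -
  have a: "0 < \<alpha>" "\<alpha> < 1" "closure {x. \<alpha> < u x} \<subset> cut u \<alpha>"
    using assms by (auto simp: platform_points_def)
  then obtain x where x: "x \<in> cut u \<alpha>" "x \<notin> closure {x. \<alpha> < u x}" by blast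
  have ux: "\<alpha> \<le> u x" using x(1) cut_pos[of \<alpha> u] a by simp
  have "\<not> (\<forall>e>0. \<exists>y\<in>{x. \<alpha> < u x}. dist y x < e)"
  proof
    assume H: "\<forall>e>0. \<exists>y\<in>{x. \<alpha> < u x}. dist y x < e"
    have "x \<in> closure {x. \<alpha> < u x}" by (rule iffD2[OF closure_approachable H])
    then show False using x(2) by blast
  qed
  then obtain r where r: "r > 0" "\<forall>y\<in>{x. \<alpha> < u x}. \<not> dist y x < r" by blast
  have all: "\<forall>y. dist x y < r \<longrightarrow> u y \<le> \<alpha>"
  proof (intro allI impI)
    fix y assume "dist x y < r"
    then have "dist y x < r" by (simp add: dist_commute)
    then show "u y \<le> \<alpha>" using r(2) by force
  qed
  then have "u x \<le> \<alpha>" using r(1) by simp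
  then have "u x = \<alpha>" using ux by simp
  then show ?thesis using r(1) all by blast
qed

lemma platform_countable:
  fixes u :: "'a::metric_space \<Rightarrow> real"
  assumes u: "u \<in> F_USCG"
  shows "countable (platform_points u)"
proof -
  have cpt: "\<And>a. a \<in> {0<..1} \<Longrightarrow> compact (cut u a)" using u by (auto simp: F_USCG_def)
  define PP where "PP = platform_points u"
  have ex: "\<forall>\<alpha>\<in>PP. \<exists>p. snd p > 0 \<and> u (fst p) = \<alpha> \<and> (\<forall>y. dist (fst p) y < snd p \<longrightarrow> u y \<le> \<alpha>)"
  proof
    fix \<alpha> assume "\<alpha> \<in> PP"
    then obtain x r where "r > 0 \<and> u x = \<alpha> \<and> (\<forall>y. dist x y < r \<longrightarrow> u y \<le> \<alpha>)"
      using platform_witness[of \<alpha> u] by (auto simp: PP_def)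
    then show "\<exists>p. snd p > 0 \<and> u (fst p) = \<alpha> \<and> (\<forall>y. dist (fst p) y < snd p \<longrightarrow> u y \<le> \<alpha>)"
      by (intro exI[of _ "(x, r)"]) simp
  qed
  obtain W where W: "\<forall>\<alpha>\<in>PP. snd (W \<alpha>) > 0 \<and> u (fst (W \<alpha>)) = \<alpha> \<and>
      (\<forall>y. dist (fst (W \<alpha>)) y < snd (W \<alpha>) \<longrightarrow> u y \<le> \<alpha>)"
    using bchoice[OF ex] by blast
  define X where "X \<alpha> = fst (W \<alpha>)" for \<alpha>
  define R where "R \<alpha> = snd (W \<alpha>)" for \<alpha>
  have R0: "\<And>\<alpha>. \<alpha> \<in> PP \<Longrightarrow> R \<alpha> > 0" using W by (simp add: R_def)
  have uX: "\<And>\<alpha>. \<alpha> \<in> PP \<Longrightarrow> u (X \<alpha>) = \<alpha>" using W by (simp add: X_def)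
  have XR: "\<And>\<alpha> y. \<alpha> \<in> PP \<Longrightarrow> dist (X \<alpha>) y < R \<alpha> \<Longrightarrow> u y \<le> \<alpha>" using W by (simp add: X_def R_def)
  have PPpos: "\<And>\<alpha>. \<alpha> \<in> PP \<Longrightarrow> 0 < \<alpha>" by (simp add: PP_def platform_points_def)
  define S where "S k m = {\<alpha> \<in> PP. 1 / real (Suc k) < \<alpha> \<and> 1 / real (Suc m) < R \<alpha>}" for k m
  have cover: "PP \<subseteq> (\<Union>k. \<Union>m. S k m)"
  proof
    fix \<alpha> assume a: "\<alpha> \<in> PP"
    obtain k where k: "inverse (real (Suc k)) < \<alpha>" using reals_Archimedean[OF PPpos[OF a]] by blast
    obtain m where m: "inverse (real (Suc m)) < R \<alpha>" using reals_Archimedean[OF R0[OF a]] by blast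
    have "\<alpha> \<in> S k m" using a k m by (simp add: S_def inverse_eq_divide)
    then show "\<alpha> \<in> (\<Union>k. \<Union>m. S k m)" by blast
  qed
  have fin: "finite (S k m)" for k m
  proof (rule ccontr)
    assume inf: "infinite (S k m)"
    have SPP: "S k m \<subseteq> PP" by (auto simp: S_def)
    have inj: "inj_on X (S k m)"
    proof (rule inj_onI)
      fix a b assume ab: "a \<in> S k m" "b \<in> S k m" "X a = X b"
      have "a \<in> PP" "b \<in> PP" using ab(1,2) SPP by blast+
      then have "a = u (X a)" "b = u (X b)" using uX by simp_all
      then show "a = b" using ab(3) by simp
    qed
    have infX: "infinite (X ` S k m)" using inf finite_imageD[OF _ inj] by blast
    define c where "c = 1 / real (Suc k)"
    have c: "c \<in> {0<..1}" by (simp add: c_def)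
    have cc: "cut u c = {x. c \<le> u x}" using cut_pos[of c u] c by simp
    have sub: "X ` S k m \<subseteq> cut u c"
    proof
      fix y assume "y \<in> X ` S k m"
      then obtain a where a: "a \<in> S k m" "y = X a" by blast
      then have "u y = a" "c < a" using uX SPP by (auto simp: S_def c_def)
      then show "y \<in> cut u c" by (simp add: cc)
    qed
    obtain z where z: "z islimpt (X ` S k m)"
      using cpt[OF c] infX sub unfolding compact_eq_Bolzano_Weierstrass by blast
    define \<delta> where "\<delta> = 1 / real (Suc m)"
    have d0: "\<delta>/2 > 0" by (simp add: \<delta>_def)
    obtain y1 where y1: "y1 \<in> X ` S k m" "y1 \<noteq> z" "dist y1 z < \<delta>/2"
      using z d0 unfolding islimpt_approachable by blast
    have "0 < dist y1 z" using y1(2) by simp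
    then have "min (\<delta>/2) (dist y1 z) > 0" using d0 by simp
    then obtain y2 where y2: "y2 \<in> X ` S k m" "y2 \<noteq> z" "dist y2 z < min (\<delta>/2) (dist y1 z)"
      using z unfolding islimpt_approachable by blast
    have ne12: "y1 \<noteq> y2" using y2(3) by auto
    have "dist y2 z < \<delta>/2" using y2(3) by simp
    then have d12: "dist y1 y2 < \<delta>" by (rule dist_triangle_half_l[OF y1(3)])
    obtain a where a: "a \<in> S k m" "y1 = X a" using y1(1) by blast
    obtain b where b: "b \<in> S k m" "y2 = X b" using y2(1) by blast
    have Ra: "\<delta> < R a" "\<delta> < R b" using a(1) b(1) by (auto simp: S_def \<delta>_def)
    have "a \<noteq> b" using ne12 a b by blast
    then consider "a < b" | "b < a" by (rule linorder_neqE)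
    then show False
    proof cases
      case 1
      have "dist (X a) (X b) < R a" using d12 a b Ra by simp
      have "a \<in> PP" "b \<in> PP" using a(1) b(1) SPP by blast+
      then have "u (X b) \<le> a" "u (X b) = b" using XR[of a "X b"] uX[of b] \<open>dist (X a) (X b) < R a\<close> by simp_all
      then show False using 1 by simp
    next
      case 2
      have "dist (X b) (X a) < R b" using d12 a b Ra by (simp add: dist_commute)
      have "a \<in> PP" "b \<in> PP" using a(1) b(1) SPP by blast+
      then have "u (X a) \<le> b" "u (X a) = a" using XR[of b "X a"] uX[of a] \<open>dist (X b) (X a) < R b\<close> by simp_all
      then show False using 2 by simp
    qed
  qed
  have "countable (\<Union>k. \<Union>m. S k m)"
  proof (rule countable_UN[OF countableI_type])
    fix k show "countable (\<Union>m. S k m)"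
      by (rule countable_UN[OF countableI_type]) (rule countable_finite[OF fin])
  qed
  then have "countable PP" using cover by (rule countable_subset[rotated])
  then show ?thesis by (simp add: PP_def)
qed

theorem theorem3p7:
  fixes u :: "'a::metric_space \<Rightarrow> real" and us :: "nat \<Rightarrow> 'a \<Rightarrow> real"
  assumes "u \<in> F_USCG" and "\<And>n. us n \<in> F_USCG"
  shows "(gamma_conv us u \<longleftrightarrow>
            (AE \<alpha> in lborel. \<alpha> \<in> {0<..<1} \<longrightarrow>
               kuratowski_conv (\<lambda>n. cut (us n) \<alpha>) (cut u \<alpha>)))
       \<and> (gamma_conv us u \<longleftrightarrow>
            (\<forall>\<alpha>\<in>{0<..<1} - platform_points u.
               kuratowski_conv (\<lambda>n. cut (us n) \<alpha>) (cut u \<alpha>)))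
       \<and> (gamma_conv us u \<longleftrightarrow>
            (\<exists>P. P \<subseteq> {0<..<1} - platform_points u
               \<and> {0<..<1} - platform_points u \<subseteq> closure P
               \<and> (\<forall>\<alpha>\<in>P. kuratowski_conv (\<lambda>n. cut (us n) \<alpha>) (cut u \<alpha>))))
       \<and> (gamma_conv us u \<longleftrightarrow>
            (\<exists>P. countable P \<and> P \<subseteq> {0<..<1} - platform_points u
               \<and> {0<..<1} - platform_points u \<subseteq> closure P
               \<and> (\<forall>\<alpha>\<in>P. kuratowski_conv (\<lambda>n. cut (us n) \<alpha>) (cut u \<alpha>))))"
  proof -
  have uF: "u \<in> F_USC" using assms(1) by (simp add: F_USCG_def)
  have usF: "\<And>n. us n \<in> F_USC" using assms(2) by (simp add: F_USCG_def)
  define D where "D = {0<..<1::real} - platform_points u"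
  define K where "K \<alpha> \<longleftrightarrow> kuratowski_conv (\<lambda>n. cut (us n) \<alpha>) (cut u \<alpha>)" for \<alpha>
  have cnt: "countable (platform_points u)" by (rule platform_countable[OF assms(1)])
  have Ddense: "{0<..<1} \<subseteq> closure D" unfolding D_def by (rule dense_D[OF cnt])
  have fwd: "\<forall>\<alpha>\<in>D. K \<alpha>" if G: "gamma_conv us u"
    using forward[OF uF usF G] by (simp add: D_def K_def)
  have bwd: "gamma_conv us u" if P: "P \<subseteq> D" "D \<subseteq> closure P" "\<forall>\<alpha>\<in>P. K \<alpha>" for P
  proof -
    have "closure D \<subseteq> closure P" using closure_mono[OF P(2)] by simp
    then have "{0<..<1} \<subseteq> closure P" using Ddense by blast
    moreover have "P \<subseteq> {0<..<1}" using P(1) by (auto simp: D_def)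
    ultimately show ?thesis using core[OF uF usF, of P] P(3) by (simp add: K_def)
  qed
  have i2: "gamma_conv us u \<longleftrightarrow> (AE \<alpha> in lborel. \<alpha> \<in> {0<..<1} \<longrightarrow> K \<alpha>)"
  proof
    assume G: "gamma_conv us u"
    have "AE \<alpha> in lborel. \<alpha> \<notin> platform_points u"
      by (rule AE_not_in[OF countable_imp_null_set_lborel[OF cnt]])
    then show "AE \<alpha> in lborel. \<alpha> \<in> {0<..<1} \<longrightarrow> K \<alpha>"
    proof (rule eventually_mono)
      fix \<alpha> assume "\<alpha> \<notin> platform_points u"
      then show "\<alpha> \<in> {0<..<1} \<longrightarrow> K \<alpha>" using fwd[OF G] by (simp add: D_def)
    qed
  next
    assume AE: "AE \<alpha> in lborel. \<alpha> \<in> {0<..<1} \<longrightarrow> K \<alpha>"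
    have "{0<..<1} \<subseteq> closure {\<alpha> \<in> {0<..<1}. K \<alpha>}" by (rule AE_dense[OF AE])
    moreover have "{\<alpha> \<in> {0<..<1}. K \<alpha>} \<subseteq> {0<..<1::real}" by blast
    ultimately show "gamma_conv us u" using core[OF uF usF, of "{\<alpha> \<in> {0<..<1}. K \<alpha>}"]
      by (simp add: K_def)
  qed
  have i3: "gamma_conv us u \<longleftrightarrow> (\<forall>\<alpha>\<in>D. K \<alpha>)"
    using fwd bwd[of D] closure_subset[of D] by blast
  have i4: "gamma_conv us u \<longleftrightarrow> (\<exists>P. P \<subseteq> D \<and> D \<subseteq> closure P \<and> (\<forall>\<alpha>\<in>P. K \<alpha>))"
  proof
    assume "gamma_conv us u"
    then show "\<exists>P. P \<subseteq> D \<and> D \<subseteq> closure P \<and> (\<forall>\<alpha>\<in>P. K \<alpha>)"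
      using fwd closure_subset[of D] by blast
  next
    assume "\<exists>P. P \<subseteq> D \<and> D \<subseteq> closure P \<and> (\<forall>\<alpha>\<in>P. K \<alpha>)"
    then show "gamma_conv us u" using bwd by blast
  qed
  have i5: "gamma_conv us u \<longleftrightarrow> (\<exists>P. countable P \<and> P \<subseteq> D \<and> D \<subseteq> closure P \<and> (\<forall>\<alpha>\<in>P. K \<alpha>))"
  proof
    assume G: "gamma_conv us u"
    obtain T where T: "countable T" "T \<subseteq> D" "D \<subseteq> closure T" by (rule separable[of D])
    then show "\<exists>P. countable P \<and> P \<subseteq> D \<and> D \<subseteq> closure P \<and> (\<forall>\<alpha>\<in>P. K \<alpha>)"
      using fwd[OF G] by blast
  next
    assume "\<exists>P. countable P \<and> P \<subseteq> D \<and> D \<subseteq> closure P \<and> (\<forall>\<alpha>\<in>P. K \<alpha>)"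
    then show "gamma_conv us u" using bwd by blast
  qed
  show ?thesis using i2 i3 i4 i5 unfolding D_def K_def by blast
qed

end
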